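(* For an integer $p\ge 2$ let $S(p)=\sum_{k\geq 0}\frac{\left(k+1-\frac{p}{2}\left\lfloor\frac{k}{p}\right\rfloor\right)\left(\left\lfloor\frac{k}{p}\right\rfloor+1\right)}{(k+1)(k+p+1)(k+2)(k+p)}$. Then \[ S(3)=\frac{\pi}{18\sqrt{3}},\qquad S(4)=\frac{\pi}{48},\qquad S(6)=\frac{7\pi}{360\sqrt{3}}, \] \[ S(5)=\frac{\left(\sqrt{5}-1\right)\sqrt{5-\sqrt{5}}+3\left(\sqrt{5}+1\right)\sqrt{5+\sqrt{5}}}{600\sqrt{10}}\,\pi . \]
   Context: $\lfloor\cdot\rfloor$ denotes the floor function. *)

theory Defs
  imports "HOL-Analysis.Analysis"
begin

definition S_term :: "nat \<Rightarrow> nat \<Rightarrow> real" where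
  "S_term p k =
     ((real k + 1 - (real p / 2) * real_of_int \<lfloor>real k / real p\<rfloor>) *
      (real_of_int \<lfloor>real k / real p\<rfloor> + 1)) /
     ((real k + 1) * (real k + real p + 1) * (real k + 2) * (real k + real p))"

definition S :: "nat \<Rightarrow> real" where
  "S p = (\<Sum>k. S_term p k)"

end

theory Submission
  imports Defs
begin


lemma Gamma_reflection_real:
  fixes x :: real
  assumes "x \<notin> \<int>"
  shows "Gamma x * Gamma (1 - x) = pi / sin (pi * x)"
proof -
  have "Gamma (complex_of_real x) * Gamma (1 - complex_of_real x) = of_real pi / sin (of_real pi * of_real x)"
    by (rule Gamma_reflection_complex)
  also have "Gamma (complex_of_real x) * Gamma (1 - complex_of_real x) = of_real (Gamma x * Gamma (1 - x))"
    by (simp flip: Gamma_complex_of_real)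
  also have "of_real pi / sin (of_real pi * of_real x) = complex_of_real (pi / sin (pi * x))"
    by (simp flip: sin_of_real)
  finally show ?thesis by (simp only: of_real_eq_iff)
qed

lemma Digamma_reflection_real:
  fixes x :: real
  assumes x: "0 < x" "x < 1"
  shows "Digamma (1 - x) - Digamma x = pi * cot (pi * x)"
proof -
  have nz: "y \<notin> \<int>" if "0 < y" "y < 1" for y :: real
    using that by (auto elim!: Ints_cases)
  have np: "y \<notin> \<int>\<^sub>\<le>\<^sub>0" if "0 < y" for y :: real
    using that by (auto elim!: nonpos_Ints_cases)
  have sx: "sin (pi * x) > 0" using x by (intro sin_gt_zero) auto
  have d1: "((\<lambda>y. Gamma y * Gamma (1 - y)) has_field_derivative
      (Gamma x * Digamma x * Gamma (1 - x) + Gamma x * (Gamma (1 - x) * Digamma (1 - x) * (-1)))) (at x)"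
    using x np by (auto intro!: derivative_eq_intros)
  have d2: "((\<lambda>y. pi / sin (pi * y)) has_field_derivative
      (- (pi * (cos (pi * x) * pi)) / (sin (pi * x))^2)) (at x)"
    using sx by (auto intro!: derivative_eq_intros simp: power2_eq_square)
  have d1': "((\<lambda>y. pi / sin (pi * y)) has_field_derivative
      (Gamma x * Digamma x * Gamma (1 - x) + Gamma x * (Gamma (1 - x) * Digamma (1 - x) * (-1)))) (at x)"
    by (rule has_field_derivative_transform_within_open[OF d1, of "{0<..<1}"])
       (use x nz in \<open>auto simp: Gamma_reflection_real\<close>)
  have eq: "Gamma x * Digamma x * Gamma (1 - x) + Gamma x * (Gamma (1 - x) * Digamma (1 - x) * (-1))
     = - (pi * (cos (pi * x) * pi)) / (sin (pi * x))^2"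
    using DERIV_unique[OF d1' d2] .
  have G: "Gamma x * Gamma (1 - x) = pi / sin (pi * x)" using nz x by (intro Gamma_reflection_real) auto
  have E: "(pi / sin (pi * x)) * (Digamma x - Digamma (1 - x)) = - (pi * (cos (pi * x) * pi)) / (sin (pi * x))^2"
    using eq G by (simp add: algebra_simps flip: G)
  have "sin (pi * x) * (Digamma x - Digamma (1 - x)) = ((pi / sin (pi * x)) * (Digamma x - Digamma (1 - x))) * ((sin (pi * x))^2 / pi)"
    using sx by (simp add: power2_eq_square field_simps)
  also have "\<dots> = - (pi * (cos (pi * x) * pi)) / (sin (pi * x))^2 * ((sin (pi * x))^2 / pi)"
    using E by simp
  also have "\<dots> = - pi * cos (pi * x)" using sx by (simp add: field_simps power2_eq_square)
  finally have "sin (pi * x) * (Digamma x - Digamma (1 - x)) = - pi * cos (pi * x)" .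
  hence "Digamma x - Digamma (1 - x) = - pi * cos (pi * x) / sin (pi * x)"
    using sx by (simp add: field_simps)
  thus ?thesis by (simp add: cot_def field_simps)
qed

lemma cot_series:
  fixes a :: real
  assumes a: "0 < a" "a < 1"
  shows "(\<lambda>n. 1 / (real n + a) - 1 / (real n + (1 - a))) sums (pi * cot (pi * a))"
proof -
  have s1: "(\<lambda>k. inverse (real (Suc k)) - inverse (a + real k)) sums (Digamma a + euler_mascheroni)"
    using summable_Digamma[of a] a by (simp add: Digamma_def summable_sums)
  have s2: "(\<lambda>k. inverse (real (Suc k)) - inverse ((1 - a) + real k)) sums (Digamma (1 - a) + euler_mascheroni)"
    using summable_Digamma[of "1 - a"] a by (simp add: Digamma_def summable_sums)
  have "(\<lambda>k. (inverse (real (Suc k)) - inverse ((1 - a) + real k)) - (inverse (real (Suc k)) - inverse (a + real k)))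
     = (\<lambda>k. 1 / (real k + a) - 1 / (real k + (1 - a)))"
    by (simp add: fun_eq_iff inverse_eq_divide add_ac)
  with sums_diff[OF s2 s1] have "(\<lambda>k. 1 / (real k + a) - 1 / (real k + (1 - a))) sums (Digamma (1 - a) - Digamma a)"
    by simp
  thus ?thesis using Digamma_reflection_real[OF a] by simp
qed



lemma floor_blk:
  assumes "r < p"
  shows "\<lfloor>real (p*q+r) / real p\<rfloor> = int q"
proof -
  have "(p*q+r) div p = q" using assms by simp
  thus ?thesis using floor_divide_of_nat_eq[of "p*q+r" p] by simp
qed

lemma S_term_blk:
  assumes "r < p"
  shows "S_term p (p*q+r) = ((real p*real q + real r + 1 - real p/2*real q)*(real q+1)) /
     ((real p*real q+real r+1)*(real p*real q+real r+real p+1)*(real p*real q+real r+2)*(real p*real q+real r+real p))"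
  using floor_blk[OF assms, of q] by (simp add: S_term_def algebra_simps)

lemma pf_3_0: "S_term 3 (3*q) = (1/18) * (1 / (3 * real q + 1)) + (-1/18) * (1 / (3 * real q + 4))"
proof -
  have "3 * real q + 1 \<noteq> 0" "1 + 3 * real q \<noteq> 0" "3 * real q + 2 \<noteq> 0" "2 + 3 * real q \<noteq> 0" "3 * real q + 3 \<noteq> 0" "3 + 3 * real q \<noteq> 0" "3 * real q + 4 \<noteq> 0" "4 + 3 * real q \<noteq> 0" by (simp_all add: add_pos_nonneg)
  thus ?thesis by (subst S_term_blk[of 0 _ q, simplified]) (simp_all add: divide_simps, algebra)
qed

lemma pf_3_1: "S_term 3 (3*q+1) = (1/18) * (1 / (3 * real q + 2)) + (-1/18) * (1 / (3 * real q + 5))"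
proof -
  have "3 * real q + 2 \<noteq> 0" "2 + 3 * real q \<noteq> 0" "3 * real q + 3 \<noteq> 0" "3 + 3 * real q \<noteq> 0" "3 * real q + 4 \<noteq> 0" "4 + 3 * real q \<noteq> 0" "3 * real q + 5 \<noteq> 0" "5 + 3 * real q \<noteq> 0" by (simp_all add: add_pos_nonneg)
  thus ?thesis by (subst S_term_blk) (simp_all add: divide_simps, algebra)
qed

lemma pf_3_2: "S_term 3 (3*q+2) = (1/6) * (1 / (3 * real q + 4)) + (-1/6) * (1 / (3 * real q + 5))"
proof -
  have "3 * real q + 3 \<noteq> 0" "3 + 3 * real q \<noteq> 0" "3 * real q + 4 \<noteq> 0" "4 + 3 * real q \<noteq> 0" "3 * real q + 5 \<noteq> 0" "5 + 3 * real q \<noteq> 0" "3 * real q + 6 \<noteq> 0" "6 + 3 * real q \<noteq> 0" by (simp_all add: add_pos_nonneg)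
  thus ?thesis by (subst S_term_blk) (simp_all add: divide_simps, algebra)
qed

lemma pf_4_0: "S_term 4 (4*q) = (1/32) * (1 / (4 * real q + 1)) + (-1/32) * (1 / (4 * real q + 5))"
proof -
  have "4 * real q + 1 \<noteq> 0" "1 + 4 * real q \<noteq> 0" "4 * real q + 2 \<noteq> 0" "2 + 4 * real q \<noteq> 0" "4 * real q + 4 \<noteq> 0" "4 + 4 * real q \<noteq> 0" "4 * real q + 5 \<noteq> 0" "5 + 4 * real q \<noteq> 0" by (simp_all add: add_pos_nonneg)
  thus ?thesis by (subst S_term_blk[of 0 _ q, simplified]) (simp_all add: divide_simps, algebra)
qed

lemma pf_4_1: "S_term 4 (4*q+1) = (1/24) * (1 / (4 * real q + 2)) + (-1/48) * (1 / (4 * real q + 3)) + (1/48) * (1 / (4 * real q + 5)) + (-1/24) * (1 / (4 * real q + 6))"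
proof -
  have "4 * real q + 2 \<noteq> 0" "2 + 4 * real q \<noteq> 0" "4 * real q + 3 \<noteq> 0" "3 + 4 * real q \<noteq> 0" "4 * real q + 5 \<noteq> 0" "5 + 4 * real q \<noteq> 0" "4 * real q + 6 \<noteq> 0" "6 + 4 * real q \<noteq> 0" by (simp_all add: add_pos_nonneg)
  thus ?thesis by (subst S_term_blk) (simp_all add: divide_simps, algebra)
qed

lemma pf_4_2: "S_term 4 (4*q+2) = (1/32) * (1 / (4 * real q + 3)) + (-1/32) * (1 / (4 * real q + 7))"
proof -
  have "4 * real q + 3 \<noteq> 0" "3 + 4 * real q \<noteq> 0" "4 * real q + 4 \<noteq> 0" "4 + 4 * real q \<noteq> 0" "4 * real q + 6 \<noteq> 0" "6 + 4 * real q \<noteq> 0" "4 * real q + 7 \<noteq> 0" "7 + 4 * real q \<noteq> 0" by (simp_all add: add_pos_nonneg)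
  thus ?thesis by (subst S_term_blk) (simp_all add: divide_simps, algebra)
qed

lemma pf_4_3: "S_term 4 (4*q+3) = (1/16) * (1 / (4 * real q + 5)) + (-1/16) * (1 / (4 * real q + 7))"
proof -
  have "4 * real q + 4 \<noteq> 0" "4 + 4 * real q \<noteq> 0" "4 * real q + 5 \<noteq> 0" "5 + 4 * real q \<noteq> 0" "4 * real q + 7 \<noteq> 0" "7 + 4 * real q \<noteq> 0" "4 * real q + 8 \<noteq> 0" "8 + 4 * real q \<noteq> 0" by (simp_all add: add_pos_nonneg)
  thus ?thesis by (subst S_term_blk) (simp_all add: divide_simps, algebra)
qed

lemma pf_5_0: "S_term 5 (5*q) = (1/50) * (1 / (5 * real q + 1)) + (-1/50) * (1 / (5 * real q + 6))"
proof -
  have "5 * real q + 1 \<noteq> 0" "1 + 5 * real q \<noteq> 0" "5 * real q + 2 \<noteq> 0" "2 + 5 * real q \<noteq> 0" "5 * real q + 5 \<noteq> 0" "5 + 5 * real q \<noteq> 0" "5 * real q + 6 \<noteq> 0" "6 + 5 * real q \<noteq> 0" by (simp_all add: add_pos_nonneg)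
  thus ?thesis by (subst S_term_blk[of 0 _ q, simplified]) (simp_all add: divide_simps, algebra)
qed

lemma pf_5_1: "S_term 5 (5*q+1) = (3/100) * (1 / (5 * real q + 2)) + (-1/60) * (1 / (5 * real q + 3)) + (1/60) * (1 / (5 * real q + 6)) + (-3/100) * (1 / (5 * real q + 7))"
proof -
  have "5 * real q + 2 \<noteq> 0" "2 + 5 * real q \<noteq> 0" "5 * real q + 3 \<noteq> 0" "3 + 5 * real q \<noteq> 0" "5 * real q + 6 \<noteq> 0" "6 + 5 * real q \<noteq> 0" "5 * real q + 7 \<noteq> 0" "7 + 5 * real q \<noteq> 0" by (simp_all add: add_pos_nonneg)
  thus ?thesis by (subst S_term_blk) (simp_all add: divide_simps, algebra)
qed

lemma pf_5_2: "S_term 5 (5*q+2) = (3/100) * (1 / (5 * real q + 3)) + (-1/60) * (1 / (5 * real q + 4)) + (1/60) * (1 / (5 * real q + 7)) + (-3/100) * (1 / (5 * real q + 8))"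
proof -
  have "5 * real q + 3 \<noteq> 0" "3 + 5 * real q \<noteq> 0" "5 * real q + 4 \<noteq> 0" "4 + 5 * real q \<noteq> 0" "5 * real q + 7 \<noteq> 0" "7 + 5 * real q \<noteq> 0" "5 * real q + 8 \<noteq> 0" "8 + 5 * real q \<noteq> 0" by (simp_all add: add_pos_nonneg)
  thus ?thesis by (subst S_term_blk) (simp_all add: divide_simps, algebra)
qed

lemma pf_5_3: "S_term 5 (5*q+3) = (1/50) * (1 / (5 * real q + 4)) + (-1/50) * (1 / (5 * real q + 9))"
proof -
  have "5 * real q + 4 \<noteq> 0" "4 + 5 * real q \<noteq> 0" "5 * real q + 5 \<noteq> 0" "5 + 5 * real q \<noteq> 0" "5 * real q + 8 \<noteq> 0" "8 + 5 * real q \<noteq> 0" "5 * real q + 9 \<noteq> 0" "9 + 5 * real q \<noteq> 0" by (simp_all add: add_pos_nonneg)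
  thus ?thesis by (subst S_term_blk) (simp_all add: divide_simps, algebra)
qed

lemma pf_5_4: "S_term 5 (5*q+4) = (1/30) * (1 / (5 * real q + 6)) + (-1/30) * (1 / (5 * real q + 9))"
proof -
  have "5 * real q + 5 \<noteq> 0" "5 + 5 * real q \<noteq> 0" "5 * real q + 6 \<noteq> 0" "6 + 5 * real q \<noteq> 0" "5 * real q + 9 \<noteq> 0" "9 + 5 * real q \<noteq> 0" "5 * real q + 10 \<noteq> 0" "10 + 5 * real q \<noteq> 0" by (simp_all add: add_pos_nonneg)
  thus ?thesis by (subst S_term_blk) (simp_all add: divide_simps, algebra)
qed

lemma pf_6_0: "S_term 6 (6*q) = (1/72) * (1 / (6 * real q + 1)) + (-1/72) * (1 / (6 * real q + 7))"
proof -
  have "6 * real q + 1 \<noteq> 0" "1 + 6 * real q \<noteq> 0" "6 * real q + 2 \<noteq> 0" "2 + 6 * real q \<noteq> 0" "6 * real q + 6 \<noteq> 0" "6 + 6 * real q \<noteq> 0" "6 * real q + 7 \<noteq> 0" "7 + 6 * real q \<noteq> 0" by (simp_all add: add_pos_nonneg)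
  thus ?thesis by (subst S_term_blk[of 0 _ q, simplified]) (simp_all add: divide_simps, algebra)
qed

lemma pf_6_1: "S_term 6 (6*q+1) = (1/45) * (1 / (6 * real q + 2)) + (-1/80) * (1 / (6 * real q + 3)) + (1/80) * (1 / (6 * real q + 7)) + (-1/45) * (1 / (6 * real q + 8))"
proof -
  have "6 * real q + 2 \<noteq> 0" "2 + 6 * real q \<noteq> 0" "6 * real q + 3 \<noteq> 0" "3 + 6 * real q \<noteq> 0" "6 * real q + 7 \<noteq> 0" "7 + 6 * real q \<noteq> 0" "6 * real q + 8 \<noteq> 0" "8 + 6 * real q \<noteq> 0" by (simp_all add: add_pos_nonneg)
  thus ?thesis by (subst S_term_blk) (simp_all add: divide_simps, algebra)
qed

lemma pf_6_2: "S_term 6 (6*q+2) = (1/40) * (1 / (6 * real q + 3)) + (-1/60) * (1 / (6 * real q + 4)) + (1/60) * (1 / (6 * real q + 8)) + (-1/40) * (1 / (6 * real q + 9))"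
proof -
  have "6 * real q + 3 \<noteq> 0" "3 + 6 * real q \<noteq> 0" "6 * real q + 4 \<noteq> 0" "4 + 6 * real q \<noteq> 0" "6 * real q + 8 \<noteq> 0" "8 + 6 * real q \<noteq> 0" "6 * real q + 9 \<noteq> 0" "9 + 6 * real q \<noteq> 0" by (simp_all add: add_pos_nonneg)
  thus ?thesis by (subst S_term_blk) (simp_all add: divide_simps, algebra)
qed

lemma pf_6_3: "S_term 6 (6*q+3) = (1/45) * (1 / (6 * real q + 4)) + (-1/80) * (1 / (6 * real q + 5)) + (1/80) * (1 / (6 * real q + 9)) + (-1/45) * (1 / (6 * real q + 10))"
proof -
  have "6 * real q + 4 \<noteq> 0" "4 + 6 * real q \<noteq> 0" "6 * real q + 5 \<noteq> 0" "5 + 6 * real q \<noteq> 0" "6 * real q + 9 \<noteq> 0" "9 + 6 * real q \<noteq> 0" "6 * real q + 10 \<noteq> 0" "10 + 6 * real q \<noteq> 0" by (simp_all add: add_pos_nonneg)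
  thus ?thesis by (subst S_term_blk) (simp_all add: divide_simps, algebra)
qed

lemma pf_6_4: "S_term 6 (6*q+4) = (1/72) * (1 / (6 * real q + 5)) + (-1/72) * (1 / (6 * real q + 11))"
proof -
  have "6 * real q + 5 \<noteq> 0" "5 + 6 * real q \<noteq> 0" "6 * real q + 6 \<noteq> 0" "6 + 6 * real q \<noteq> 0" "6 * real q + 10 \<noteq> 0" "10 + 6 * real q \<noteq> 0" "6 * real q + 11 \<noteq> 0" "11 + 6 * real q \<noteq> 0" by (simp_all add: add_pos_nonneg)
  thus ?thesis by (subst S_term_blk) (simp_all add: divide_simps, algebra)
qed

lemma pf_6_5: "S_term 6 (6*q+5) = (1/48) * (1 / (6 * real q + 7)) + (-1/48) * (1 / (6 * real q + 11))"
proof -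
  have "6 * real q + 6 \<noteq> 0" "6 + 6 * real q \<noteq> 0" "6 * real q + 7 \<noteq> 0" "7 + 6 * real q \<noteq> 0" "6 * real q + 11 \<noteq> 0" "11 + 6 * real q \<noteq> 0" "6 * real q + 12 \<noteq> 0" "12 + 6 * real q \<noteq> 0" by (simp_all add: add_pos_nonneg)
  thus ?thesis by (subst S_term_blk) (simp_all add: divide_simps, algebra)
qed



lemma cot_series_p:
  fixes p c :: real
  assumes "0 < c" "c < p"
  shows "(\<lambda>q. 1 / (p * real q + c) - 1 / (p * real q + (p - c))) sums (pi / p * cot (pi * c / p))"
proof -
  have p: "p > 0" using assms by linarith
  from sums_mult[OF cot_series[of "c/p"], of "1/p"] assms p
  have "(\<lambda>n. 1 / p * (1 / (real n + c / p) - 1 / (real n + (1 - c / p)))) sums (1 / p * (pi * cot (pi * (c / p))))"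
    by (simp add: field_simps)
  moreover have "(\<lambda>n. 1 / p * (1 / (real n + c / p) - 1 / (real n + (1 - c / p)))) =
      (\<lambda>q. 1 / (p * real q + c) - 1 / (p * real q + (p - c)))"
  proof
    fix n :: nat
    have a: "real n + c / p = (p * real n + c) / p" using p by (simp add: field_simps)
    have b: "real n + (1 - c / p) = (p * real n + (p - c)) / p" using p by (simp add: field_simps)
    have "1 / p * (1 / (real n + c / p) - 1 / (real n + (1 - c / p))) =
       1 / p * (p / (p * real n + c) - p / (p * real n + (p - c)))"
      unfolding a b by simp
    also have "\<dots> = 1 / (p * real n + c) - 1 / (p * real n + (p - c))"
      using p by (simp add: right_diff_distrib)
    finally show "1 / p * (1 / (real n + c / p) - 1 / (real n + (1 - c / p))) =
      1 / (p * real n + c) - 1 / (p * real n + (p - c))" .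
  qed
  ultimately show ?thesis by (simp add: mult.commute)
qed

lemma tele_p:
  fixes p c :: real
  assumes "0 < c" "0 < p"
  shows "(\<lambda>q. 1 / (p * real q + c) - 1 / (p * real q + (p + c))) sums (1 / c)"
proof -
  have lim: "(\<lambda>q. 1 / (p * real q + c)) \<longlonglongrightarrow> 0"
  proof -
    have "filterlim (\<lambda>q. c + p * real q) at_top sequentially"
      by (rule filterlim_tendsto_add_at_top[OF tendsto_const])
         (rule filterlim_tendsto_pos_mult_at_top[OF tendsto_const \<open>0 < p\<close> filterlim_real_sequentially])
    hence "filterlim (\<lambda>q. p * real q + c) at_top sequentially" by (simp add: add.commute)
    from tendsto_inverse_0_at_top[OF this] show ?thesis by (simp add: inverse_eq_divide)
  qed
  from telescope_sums'[OF lim] show ?thesis by (simp add: algebra_simps)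
qed

lemma summable_S_term:
  assumes "p > 0"
  shows "summable (S_term p)"
proof (rule summable_comparison_test')
  show "summable (\<lambda>k. 1 / (real k + 1)^2)"
    using inverse_squares_sums by (simp add: sums_summable add.commute)
next
  fix k :: nat
  define q where "q = k div p"
  have fl: "\<lfloor>real k / real p\<rfloor> = int q" unfolding q_def using floor_divide_of_nat_eq[of k p] by simp
  have "q * p \<le> k" unfolding q_def by simp
  hence qk: "real p * real q \<le> real k" by (metis of_nat_le_iff of_nat_mult mult.commute)
  have "q \<le> k" unfolding q_def by simp
  hence qk2: "real q \<le> real k" by simp
  define N where "N = (real k + 1 - real p / 2 * real q) * (real q + 1)"
  define D where "D = (real k + 1) * (real k + real p + 1) * (real k + 2) * (real k + real p)"
  have eq: "S_term p k = N / D" unfolding S_term_def N_def D_def fl by simp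
  have pq: "real p / 2 * real q \<ge> 0" by simp
  have N0: "N \<ge> 0" unfolding N_def using qk by (intro mult_nonneg_nonneg) auto
  have N1: "N \<le> (real k + 1) * (real k + 1)" unfolding N_def using qk qk2 pq
    by (intro mult_mono) auto
  have D1: "(real k + 1) * (real k + 1) * ((real k + 1) * (real k + 1)) \<le> D"
    unfolding D_def using assms
    by (simp add: mult.assoc mult_mono)
  have Dpos: "(real k + 1) * (real k + 1) * ((real k + 1) * (real k + 1)) > 0" by simp
  have D0: "D \<ge> 0" using D1 Dpos by linarith
  have "N / D \<le> ((real k + 1) * (real k + 1)) / D"
    using N1 D0 by (intro divide_right_mono) auto
  also have "\<dots> \<le> ((real k + 1) * (real k + 1)) / ((real k + 1) * (real k + 1) * ((real k + 1) * (real k + 1)))"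
  proof (rule divide_left_mono)
    have "D > 0" using D1 Dpos by linarith
    thus "0 < D * ((real k + 1) * (real k + 1) * ((real k + 1) * (real k + 1)))" using Dpos by simp
  qed (use D1 in auto)
  also have "\<dots> = 1 / (real k + 1)^2" by (simp add: power2_eq_square)
  finally have "N / D \<le> 1 / (real k + 1)^2" .
  moreover have "N / D \<ge> 0" using N0 D0 by simp
  ultimately show "norm (S_term p k) \<le> 1 / (real k + 1)^2" using eq by simp
qed

lemma sum_shift_blk: "sum f {m..<m + (p::nat)} = (\<Sum>r<p. f (m + r))"
  by (induct p) auto

lemma S_blocks:
  assumes "p > 0"
  shows "(\<lambda>q. \<Sum>r<p. S_term p (p*q+r)) sums S p"
proof -
  have "S_term p sums S p" unfolding S_def using summable_S_term[OF assms] by (simp add: summable_sums)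
  from sums_group[OF this assms] show ?thesis by (simp add: sum_shift_blk mult.commute)
qed


lemma S3_expr: "S 3 = (1/6) * (pi / 3 * cot (pi * 1 / 3)) + (-1/9) * (1 / 1) + (2/9) * (1 / 2)"
proof -
  have X1: "(\<lambda>q. 1 / (3 * real q + 1) - 1 / (3 * real q + 2)) sums (pi / 3 * cot (pi * 1 / 3))"
    using cot_series_p[where p=3 and c=1] by simp
  have Y1: "(\<lambda>q. 1 / (3 * real q + 1) - 1 / (3 * real q + 4)) sums (1 / 1)"
    using tele_p[where p=3 and c=1] by simp
  have Y2: "(\<lambda>q. 1 / (3 * real q + 2) - 1 / (3 * real q + 5)) sums (1 / 2)"
    using tele_p[where p=3 and c=2] by simp
  have F: "(\<lambda>q. (1/6) * (1 / (3 * real q + 1) - 1 / (3 * real q + 2)) + (-1/9) * (1 / (3 * real q + 1) - 1 / (3 * real q + 4)) + (2/9) * (1 / (3 * real q + 2) - 1 / (3 * real q + 5))) sums ((1/6) * (pi / 3 * cot (pi * 1 / 3)) + (-1/9) * (1 / 1) + (2/9) * (1 / 2))"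
    by (intro sums_add sums_mult X1 Y1 Y2)
  have blk: "(\<Sum>r<3. S_term 3 (3*q+r)) = (1/6) * (1 / (3 * real q + 1) - 1 / (3 * real q + 2)) + (-1/9) * (1 / (3 * real q + 1) - 1 / (3 * real q + 4)) + (2/9) * (1 / (3 * real q + 2) - 1 / (3 * real q + 5))" for q
  proof -
    have E: "(\<Sum>r<3. S_term 3 (3*q+r)) = S_term 3 (3*q) + S_term 3 (3*q+1) + S_term 3 (3*q+2)"
      by (simp add: lessThan_nat_numeral)
    define u1 where "u1 = 1 / (3 * real q + 1)"
    define u2 where "u2 = 1 / (3 * real q + 2)"
    define u3 where "u3 = 1 / (3 * real q + 3)"
    define u4 where "u4 = 1 / (3 * real q + 4)"
    define u5 where "u5 = 1 / (3 * real q + 5)"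
    define u6 where "u6 = 1 / (3 * real q + 6)"
    show ?thesis unfolding E pf_3_0[of q] pf_3_1[of q] pf_3_2[of q] unfolding u1_def[symmetric] u2_def[symmetric] u3_def[symmetric] u4_def[symmetric] u5_def[symmetric] u6_def[symmetric] by (simp add: field_simps)
  qed
  from S_blocks[of 3] have "(\<lambda>q. (1/6) * (1 / (3 * real q + 1) - 1 / (3 * real q + 2)) + (-1/9) * (1 / (3 * real q + 1) - 1 / (3 * real q + 4)) + (2/9) * (1 / (3 * real q + 2) - 1 / (3 * real q + 5))) sums S 3" by (simp only: blk)
  from sums_unique2[OF this F] show ?thesis .
qed

lemma S4_expr: "S 4 = (1/12) * (pi / 4 * cot (pi * 1 / 4)) + (-5/96) * (1 / 1) + (1/24) * (1 / 2) + (3/32) * (1 / 3)"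
proof -
  have X1: "(\<lambda>q. 1 / (4 * real q + 1) - 1 / (4 * real q + 3)) sums (pi / 4 * cot (pi * 1 / 4))"
    using cot_series_p[where p=4 and c=1] by simp
  have Y1: "(\<lambda>q. 1 / (4 * real q + 1) - 1 / (4 * real q + 5)) sums (1 / 1)"
    using tele_p[where p=4 and c=1] by simp
  have Y2: "(\<lambda>q. 1 / (4 * real q + 2) - 1 / (4 * real q + 6)) sums (1 / 2)"
    using tele_p[where p=4 and c=2] by simp
  have Y3: "(\<lambda>q. 1 / (4 * real q + 3) - 1 / (4 * real q + 7)) sums (1 / 3)"
    using tele_p[where p=4 and c=3] by simp
  have F: "(\<lambda>q. (1/12) * (1 / (4 * real q + 1) - 1 / (4 * real q + 3)) + (-5/96) * (1 / (4 * real q + 1) - 1 / (4 * real q + 5)) + (1/24) * (1 / (4 * real q + 2) - 1 / (4 * real q + 6)) + (3/32) * (1 / (4 * real q + 3) - 1 / (4 * real q + 7))) sums ((1/12) * (pi / 4 * cot (pi * 1 / 4)) + (-5/96) * (1 / 1) + (1/24) * (1 / 2) + (3/32) * (1 / 3))"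
    by (intro sums_add sums_mult X1 Y1 Y2 Y3)
  have blk: "(\<Sum>r<4. S_term 4 (4*q+r)) = (1/12) * (1 / (4 * real q + 1) - 1 / (4 * real q + 3)) + (-5/96) * (1 / (4 * real q + 1) - 1 / (4 * real q + 5)) + (1/24) * (1 / (4 * real q + 2) - 1 / (4 * real q + 6)) + (3/32) * (1 / (4 * real q + 3) - 1 / (4 * real q + 7))" for q
  proof -
    have E: "(\<Sum>r<4. S_term 4 (4*q+r)) = S_term 4 (4*q) + S_term 4 (4*q+1) + S_term 4 (4*q+2) + S_term 4 (4*q+3)"
      by (simp add: lessThan_nat_numeral)
    define u1 where "u1 = 1 / (4 * real q + 1)"
    define u2 where "u2 = 1 / (4 * real q + 2)"
    define u3 where "u3 = 1 / (4 * real q + 3)"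
    define u4 where "u4 = 1 / (4 * real q + 4)"
    define u5 where "u5 = 1 / (4 * real q + 5)"
    define u6 where "u6 = 1 / (4 * real q + 6)"
    define u7 where "u7 = 1 / (4 * real q + 7)"
    define u8 where "u8 = 1 / (4 * real q + 8)"
    show ?thesis unfolding E pf_4_0[of q] pf_4_1[of q] pf_4_2[of q] pf_4_3[of q] unfolding u1_def[symmetric] u2_def[symmetric] u3_def[symmetric] u4_def[symmetric] u5_def[symmetric] u6_def[symmetric] u7_def[symmetric] u8_def[symmetric] by (simp add: field_simps)
  qed
  from S_blocks[of 4] have "(\<lambda>q. (1/12) * (1 / (4 * real q + 1) - 1 / (4 * real q + 3)) + (-5/96) * (1 / (4 * real q + 1) - 1 / (4 * real q + 5)) + (1/24) * (1 / (4 * real q + 2) - 1 / (4 * real q + 6)) + (3/32) * (1 / (4 * real q + 3) - 1 / (4 * real q + 7))) sums S 4" by (simp only: blk)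
  from sums_unique2[OF this F] show ?thesis .
qed

lemma S5_expr: "S 5 = (1/20) * (pi / 5 * cot (pi * 1 / 5)) + (1/60) * (pi / 5 * cot (pi * 2 / 5)) + (-3/100) * (1 / 1) + (1/75) * (1 / 2) + (3/100) * (1 / 3) + (4/75) * (1 / 4)"
proof -
  have X1: "(\<lambda>q. 1 / (5 * real q + 1) - 1 / (5 * real q + 4)) sums (pi / 5 * cot (pi * 1 / 5))"
    using cot_series_p[where p=5 and c=1] by simp
  have X2: "(\<lambda>q. 1 / (5 * real q + 2) - 1 / (5 * real q + 3)) sums (pi / 5 * cot (pi * 2 / 5))"
    using cot_series_p[where p=5 and c=2] by simp
  have Y1: "(\<lambda>q. 1 / (5 * real q + 1) - 1 / (5 * real q + 6)) sums (1 / 1)"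
    using tele_p[where p=5 and c=1] by simp
  have Y2: "(\<lambda>q. 1 / (5 * real q + 2) - 1 / (5 * real q + 7)) sums (1 / 2)"
    using tele_p[where p=5 and c=2] by simp
  have Y3: "(\<lambda>q. 1 / (5 * real q + 3) - 1 / (5 * real q + 8)) sums (1 / 3)"
    using tele_p[where p=5 and c=3] by simp
  have Y4: "(\<lambda>q. 1 / (5 * real q + 4) - 1 / (5 * real q + 9)) sums (1 / 4)"
    using tele_p[where p=5 and c=4] by simp
  have F: "(\<lambda>q. (1/20) * (1 / (5 * real q + 1) - 1 / (5 * real q + 4)) + (1/60) * (1 / (5 * real q + 2) - 1 / (5 * real q + 3)) + (-3/100) * (1 / (5 * real q + 1) - 1 / (5 * real q + 6)) + (1/75) * (1 / (5 * real q + 2) - 1 / (5 * real q + 7)) + (3/100) * (1 / (5 * real q + 3) - 1 / (5 * real q + 8)) + (4/75) * (1 / (5 * real q + 4) - 1 / (5 * real q + 9))) sums ((1/20) * (pi / 5 * cot (pi * 1 / 5)) + (1/60) * (pi / 5 * cot (pi * 2 / 5)) + (-3/100) * (1 / 1) + (1/75) * (1 / 2) + (3/100) * (1 / 3) + (4/75) * (1 / 4))"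
    by (intro sums_add sums_mult X1 X2 Y1 Y2 Y3 Y4)
  have blk: "(\<Sum>r<5. S_term 5 (5*q+r)) = (1/20) * (1 / (5 * real q + 1) - 1 / (5 * real q + 4)) + (1/60) * (1 / (5 * real q + 2) - 1 / (5 * real q + 3)) + (-3/100) * (1 / (5 * real q + 1) - 1 / (5 * real q + 6)) + (1/75) * (1 / (5 * real q + 2) - 1 / (5 * real q + 7)) + (3/100) * (1 / (5 * real q + 3) - 1 / (5 * real q + 8)) + (4/75) * (1 / (5 * real q + 4) - 1 / (5 * real q + 9))" for q
  proof -
    have E: "(\<Sum>r<5. S_term 5 (5*q+r)) = S_term 5 (5*q) + S_term 5 (5*q+1) + S_term 5 (5*q+2) + S_term 5 (5*q+3) + S_term 5 (5*q+4)"
      by (simp add: lessThan_nat_numeral)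
    define u1 where "u1 = 1 / (5 * real q + 1)"
    define u2 where "u2 = 1 / (5 * real q + 2)"
    define u3 where "u3 = 1 / (5 * real q + 3)"
    define u4 where "u4 = 1 / (5 * real q + 4)"
    define u5 where "u5 = 1 / (5 * real q + 5)"
    define u6 where "u6 = 1 / (5 * real q + 6)"
    define u7 where "u7 = 1 / (5 * real q + 7)"
    define u8 where "u8 = 1 / (5 * real q + 8)"
    define u9 where "u9 = 1 / (5 * real q + 9)"
    define u10 where "u10 = 1 / (5 * real q + 10)"
    show ?thesis unfolding E pf_5_0[of q] pf_5_1[of q] pf_5_2[of q] pf_5_3[of q] pf_5_4[of q] unfolding u1_def[symmetric] u2_def[symmetric] u3_def[symmetric] u4_def[symmetric] u5_def[symmetric] u6_def[symmetric] u7_def[symmetric] u8_def[symmetric] u9_def[symmetric] u10_def[symmetric] by (simp add: field_simps)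
  qed
  from S_blocks[of 5] have "(\<lambda>q. (1/20) * (1 / (5 * real q + 1) - 1 / (5 * real q + 4)) + (1/60) * (1 / (5 * real q + 2) - 1 / (5 * real q + 3)) + (-3/100) * (1 / (5 * real q + 1) - 1 / (5 * real q + 6)) + (1/75) * (1 / (5 * real q + 2) - 1 / (5 * real q + 7)) + (3/100) * (1 / (5 * real q + 3) - 1 / (5 * real q + 8)) + (4/75) * (1 / (5 * real q + 4) - 1 / (5 * real q + 9))) sums S 5" by (simp only: blk)
  from sums_unique2[OF this F] show ?thesis .
qed

lemma S6_expr: "S 6 = (1/30) * (pi / 6 * cot (pi * 1 / 6)) + (1/60) * (pi / 6 * cot (pi * 2 / 6)) + (-7/360) * (1 / 1) + (1/180) * (1 / 2) + (1/80) * (1 / 3) + (1/45) * (1 / 4) + (5/144) * (1 / 5)"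
proof -
  have X1: "(\<lambda>q. 1 / (6 * real q + 1) - 1 / (6 * real q + 5)) sums (pi / 6 * cot (pi * 1 / 6))"
    using cot_series_p[where p=6 and c=1] by simp
  have X2: "(\<lambda>q. 1 / (6 * real q + 2) - 1 / (6 * real q + 4)) sums (pi / 6 * cot (pi * 2 / 6))"
    using cot_series_p[where p=6 and c=2] by simp
  have Y1: "(\<lambda>q. 1 / (6 * real q + 1) - 1 / (6 * real q + 7)) sums (1 / 1)"
    using tele_p[where p=6 and c=1] by simp
  have Y2: "(\<lambda>q. 1 / (6 * real q + 2) - 1 / (6 * real q + 8)) sums (1 / 2)"
    using tele_p[where p=6 and c=2] by simp
  have Y3: "(\<lambda>q. 1 / (6 * real q + 3) - 1 / (6 * real q + 9)) sums (1 / 3)"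
    using tele_p[where p=6 and c=3] by simp
  have Y4: "(\<lambda>q. 1 / (6 * real q + 4) - 1 / (6 * real q + 10)) sums (1 / 4)"
    using tele_p[where p=6 and c=4] by simp
  have Y5: "(\<lambda>q. 1 / (6 * real q + 5) - 1 / (6 * real q + 11)) sums (1 / 5)"
    using tele_p[where p=6 and c=5] by simp
  have F: "(\<lambda>q. (1/30) * (1 / (6 * real q + 1) - 1 / (6 * real q + 5)) + (1/60) * (1 / (6 * real q + 2) - 1 / (6 * real q + 4)) + (-7/360) * (1 / (6 * real q + 1) - 1 / (6 * real q + 7)) + (1/180) * (1 / (6 * real q + 2) - 1 / (6 * real q + 8)) + (1/80) * (1 / (6 * real q + 3) - 1 / (6 * real q + 9)) + (1/45) * (1 / (6 * real q + 4) - 1 / (6 * real q + 10)) + (5/144) * (1 / (6 * real q + 5) - 1 / (6 * real q + 11))) sums ((1/30) * (pi / 6 * cot (pi * 1 / 6)) + (1/60) * (pi / 6 * cot (pi * 2 / 6)) + (-7/360) * (1 / 1) + (1/180) * (1 / 2) + (1/80) * (1 / 3) + (1/45) * (1 / 4) + (5/144) * (1 / 5))"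
    by (intro sums_add sums_mult X1 X2 Y1 Y2 Y3 Y4 Y5)
  have blk: "(\<Sum>r<6. S_term 6 (6*q+r)) = (1/30) * (1 / (6 * real q + 1) - 1 / (6 * real q + 5)) + (1/60) * (1 / (6 * real q + 2) - 1 / (6 * real q + 4)) + (-7/360) * (1 / (6 * real q + 1) - 1 / (6 * real q + 7)) + (1/180) * (1 / (6 * real q + 2) - 1 / (6 * real q + 8)) + (1/80) * (1 / (6 * real q + 3) - 1 / (6 * real q + 9)) + (1/45) * (1 / (6 * real q + 4) - 1 / (6 * real q + 10)) + (5/144) * (1 / (6 * real q + 5) - 1 / (6 * real q + 11))" for q
  proof -
    have E: "(\<Sum>r<6. S_term 6 (6*q+r)) = S_term 6 (6*q) + S_term 6 (6*q+1) + S_term 6 (6*q+2) + S_term 6 (6*q+3) + S_term 6 (6*q+4) + S_term 6 (6*q+5)"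
      by (simp add: lessThan_nat_numeral)
    define u1 where "u1 = 1 / (6 * real q + 1)"
    define u2 where "u2 = 1 / (6 * real q + 2)"
    define u3 where "u3 = 1 / (6 * real q + 3)"
    define u4 where "u4 = 1 / (6 * real q + 4)"
    define u5 where "u5 = 1 / (6 * real q + 5)"
    define u6 where "u6 = 1 / (6 * real q + 6)"
    define u7 where "u7 = 1 / (6 * real q + 7)"
    define u8 where "u8 = 1 / (6 * real q + 8)"
    define u9 where "u9 = 1 / (6 * real q + 9)"
    define u10 where "u10 = 1 / (6 * real q + 10)"
    define u11 where "u11 = 1 / (6 * real q + 11)"
    define u12 where "u12 = 1 / (6 * real q + 12)"
    show ?thesis unfolding E pf_6_0[of q] pf_6_1[of q] pf_6_2[of q] pf_6_3[of q] pf_6_4[of q] pf_6_5[of q] unfolding u1_def[symmetric] u2_def[symmetric] u3_def[symmetric] u4_def[symmetric] u5_def[symmetric] u6_def[symmetric] u7_def[symmetric] u8_def[symmetric] u9_def[symmetric] u10_def[symmetric] u11_def[symmetric] u12_def[symmetric] by (simp add: field_simps)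
  qed
  from S_blocks[of 6] have "(\<lambda>q. (1/30) * (1 / (6 * real q + 1) - 1 / (6 * real q + 5)) + (1/60) * (1 / (6 * real q + 2) - 1 / (6 * real q + 4)) + (-7/360) * (1 / (6 * real q + 1) - 1 / (6 * real q + 7)) + (1/180) * (1 / (6 * real q + 2) - 1 / (6 * real q + 8)) + (1/80) * (1 / (6 * real q + 3) - 1 / (6 * real q + 9)) + (1/45) * (1 / (6 * real q + 4) - 1 / (6 * real q + 10)) + (5/144) * (1 / (6 * real q + 5) - 1 / (6 * real q + 11))) sums S 6" by (simp only: blk)
  from sums_unique2[OF this F] show ?thesis .
qed



lemma S3_val: "S 3 = pi / (18 * sqrt 3)"
  unfolding S3_expr by (simp add: cot_def cos_60 sin_60 field_simps)

lemma S4_val: "S 4 = pi / 48"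
  unfolding S4_expr by (simp add: cot_def cos_45 sin_45 field_simps)

lemma S6_val: "S 6 = 7 * pi / (360 * sqrt 3)"
proof -
  have "pi * 2 / 6 = pi / 3" by simp
  have c6: "cot (pi / 6) = sqrt 3" by (simp add: cot_def cos_30 sin_30)
  have c3: "cot (pi / 3) = 1 / sqrt 3" by (simp add: cot_def cos_60 sin_60)
  have s3: "sqrt 3 * sqrt 3 = (3::real)" by simp
  have e: "pi * 2 / 6 = pi / 3" by simp
  show ?thesis unfolding S6_expr by (simp add: c6 c3 e field_simps)
qed

lemma cos_pi5: "cos (pi / 5) = (1 + sqrt 5) / 4"
proof -
  define c where "c = cos (pi / 5)"
  have e: "3 * (pi / 5) = pi - 2 * (pi / 5)" by simp
  have "cos (3 * (pi / 5)) = - cos (2 * (pi / 5))" by (subst e) (rule cos_pi_minus)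
  hence "4 * c ^ 3 - 3 * c = - (2 * c ^ 2 - 1)" unfolding c_def cos_treble_cos cos_double_cos .
  hence eq: "(c + 1) * (4 * c ^ 2 - 2 * c - 1) = 0" by (simp add: algebra_simps power2_eq_square power3_eq_cube)
  have "cos (pi / 3) < cos (pi / 5)" by (rule cos_monotone_0_pi) auto
  hence cg: "c > 1 / 2" unfolding c_def cos_60 .
  hence "4 * c ^ 2 - 2 * c - 1 = 0" using eq by simp
  hence "(4 * c - 1) ^ 2 = 5" by (simp add: algebra_simps power2_eq_square)
  hence "sqrt 5 = 4 * c - 1" using cg by (intro real_sqrt_unique) auto
  thus ?thesis unfolding c_def by simp
qed

lemma sin_pi5: "sin (pi / 5) = sqrt (10 - 2 * sqrt 5) / 4"
proof -
  have sp: "sin (pi / 5) > 0" by (rule sin_gt_zero) auto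
  have "(4 * sin (pi / 5)) ^ 2 = 16 * (1 - (cos (pi / 5)) ^ 2)" by (simp add: sin_squared_eq)
  also have "\<dots> = 10 - 2 * sqrt 5" unfolding cos_pi5 by (simp add: power2_eq_square field_simps)
  finally have "sqrt (10 - 2 * sqrt 5) = 4 * sin (pi / 5)" using sp by (intro real_sqrt_unique) auto
  thus ?thesis by simp
qed

lemma cos_2pi5: "cos (pi * 2 / 5) = (sqrt 5 - 1) / 4"
proof -
  have "cos (pi * 2 / 5) = cos (2 * (pi / 5))" by (simp add: mult.commute)
  also have "\<dots> = 2 * cos (pi / 5) ^ 2 - 1" by (rule cos_double_cos)
  also have "\<dots> = (sqrt 5 - 1) / 4" unfolding cos_pi5 by (simp add: power2_eq_square field_simps)
  finally show ?thesis .
qed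

lemma sin_2pi5: "sin (pi * 2 / 5) = sqrt (10 + 2 * sqrt 5) / 4"
proof -
  have sp: "sin (pi * 2 / 5) > 0" by (rule sin_gt_zero) auto
  have "(4 * sin (pi * 2 / 5)) ^ 2 = 16 * (1 - (cos (pi * 2 / 5)) ^ 2)" by (simp add: sin_squared_eq)
  also have "\<dots> = 10 + 2 * sqrt 5" unfolding cos_2pi5 by (simp add: power2_eq_square field_simps)
  finally have "sqrt (10 + 2 * sqrt 5) = 4 * sin (pi * 2 / 5)" using sp by (intro real_sqrt_unique) auto
  thus ?thesis by simp
qed

lemma S5_val: "S 5 = ((sqrt 5 - 1) * sqrt (5 - sqrt 5) + 3 * (sqrt 5 + 1) * sqrt (5 + sqrt 5))
               / (600 * sqrt 10) * pi"
proof -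
  define s where "s = sqrt (5::real)"
  define u where "u = sqrt (5 - s)"
  define v where "v = sqrt (5 + s)"
  have s2: "s * s = 5" unfolding s_def by simp
  have s0: "s > 0" unfolding s_def by simp
  have s5: "s < 5" unfolding s_def by (rule real_less_lsqrt) auto
  have u0: "u > 0" unfolding u_def using s5 by simp
  have v0: "v > 0" unfolding v_def using s0 by simp
  have uv: "u * v = 2 * s"
  proof -
    have "u * v = sqrt ((5 - s) * (5 + s))" unfolding u_def v_def by (simp add: real_sqrt_mult)
    also have "(5 - s) * (5 + s) = 4 * 5" using s2 by (simp add: algebra_simps)
    also have "sqrt (4 * 5) = 2 * s" unfolding s_def by (subst real_sqrt_mult) simp
    finally show ?thesis .
  qed
  have a: "sqrt (10 - 2 * sqrt 5) = sqrt 2 * u"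
    unfolding u_def s_def by (simp add: real_sqrt_mult[symmetric] algebra_simps)
  have b: "sqrt (10 + 2 * sqrt 5) = sqrt 2 * v"
    unfolding v_def s_def by (simp add: real_sqrt_mult[symmetric] algebra_simps)
  have t: "sqrt 10 = sqrt 2 * s" unfolding s_def by (simp add: real_sqrt_mult[symmetric])
  have c1: "cot (pi / 5) = (1 + s) / (sqrt 2 * u)"
    unfolding cot_def cos_pi5 sin_pi5 a s_def using u0 by (simp add: field_simps)
  have c2: "cot (pi * 2 / 5) = (s - 1) / (sqrt 2 * v)"
    unfolding cot_def cos_2pi5 sin_2pi5 b s_def using v0 by (simp add: field_simps)
  have iu: "1 / u = v / (2 * s)" using uv u0 v0 s0 by (simp add: field_simps)
  have iv: "1 / v = u / (2 * s)" using uv u0 v0 s0 by (simp add: field_simps)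
  have r2: "sqrt 2 > 0" by simp
  have "S 5 = pi / (100 * sqrt 2) * ((1 + s) * (1 / u)) + pi / (300 * sqrt 2) * ((s - 1) * (1 / v))"
    unfolding S5_expr using c1 c2 by (simp add: field_simps)
  also have "\<dots> = ((s - 1) * u + 3 * (s + 1) * v) / (600 * (sqrt 2 * s)) * pi"
    unfolding iu iv using s0 r2 by (simp add: field_simps)
  finally show ?thesis unfolding t u_def v_def s_def .
qed


theorem mainTheorem9:
  shows "S 3 = pi / (18 * sqrt 3) \<and>
         S 4 = pi / 48 \<and>
         S 6 = 7 * pi / (360 * sqrt 3) \<and>
         S 5 = ((sqrt 5 - 1) * sqrt (5 - sqrt 5) + 3 * (sqrt 5 + 1) * sqrt (5 + sqrt 5))
               / (600 * sqrt 10) * pi"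
  using S3_val S4_val S6_val S5_val by blast

end
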